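(* Let $G=(V,E,w)$ be a finite undirected graph with positive vertex weights and let $IC, C\subseteq V$. (a) Suppose $IC\subseteq VC_w$ for some minimum weight vertex cover $VC_w$ of $G$. Then $w(p)\le \alpha_w(G[N(p)\setminus IC])$ for every $p\in IC$. Moreover, if $v\in IC$ and $u\in N^2(v)$ satisfy $w(v)>\alpha_w(G[N(v)\setminus(IC\cup N(u))])$, then $IC\cup\{u\}\subseteq VC_w$. (b) Suppose $C$ is contained in every minimum weight vertex cover of $G$. Then $w(p)<\alpha_w(G[N(p)\setminus C])$ for every $p\in C$. Moreover, if $v\in C$ and $u\in N^2(v)$ satisfy $w(v)\ge\alpha_w(G[N(v)\setminus(C\cup N(u))])$, then $C\cup\{u\}$ is contained in every minimum weight vertex cover of $G$.
   Context: $G=(V,E,w)$ is a finite simple undirected graph with $w:V\to\mathbb{R}^{+}$; $w(S)=\sum_{v\in S}w(v)$. A vertex cover is a set $VC\subseteq V$ meeting every edge; a minimum weight vertex cover (MWVC) is one of minimum total weight. $N(v)$ is the neighbour set of $v$; $N^2(v)$ is the set of vertices at graph distance exactly $2$ from $v$. For $S\subseteq V$, $G[S]$ is the induced subgraph and $\alpha_w(G[S])$ is the maximum weight of an independent set in $G[S]$, with $\alpha_w(G[\emptyset])=0$. *)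

theory Defs
  imports Complex_Main
begin

definition simple_graph :: "'a set \<Rightarrow> 'a set set \<Rightarrow> bool" where
  "simple_graph V E \<longleftrightarrow> finite V \<and>
     (\<forall>e\<in>E. \<exists>u v. e = {u, v} \<and> u \<noteq> v \<and> u \<in> V \<and> v \<in> V)"

definition wsum :: "('a \<Rightarrow> real) \<Rightarrow> 'a set \<Rightarrow> real" where
  "wsum w S = (\<Sum>v\<in>S. w v)"

definition vertex_cover :: "'a set \<Rightarrow> 'a set set \<Rightarrow> 'a set \<Rightarrow> bool" where
  "vertex_cover V E C \<longleftrightarrow> C \<subseteq> V \<and> (\<forall>e\<in>E. e \<inter> C \<noteq> {})"

definition min_weight_vc :: "'a set \<Rightarrow> 'a set set \<Rightarrow> ('a \<Rightarrow> real) \<Rightarrow> 'a set \<Rightarrow> bool" where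
  "min_weight_vc V E w C \<longleftrightarrow> vertex_cover V E C \<and>
     (\<forall>C'. vertex_cover V E C' \<longrightarrow> wsum w C \<le> wsum w C')"

definition nbrs :: "'a set set \<Rightarrow> 'a \<Rightarrow> 'a set" where
  "nbrs E v = {u. {u, v} \<in> E}"

definition nbrs2 :: "'a set set \<Rightarrow> 'a \<Rightarrow> 'a set" where
  "nbrs2 E v = {u. u \<noteq> v \<and> u \<notin> nbrs E v \<and> (\<exists>x\<in>nbrs E v. u \<in> nbrs E x)}"

definition independent :: "'a set set \<Rightarrow> 'a set \<Rightarrow> bool" where
  "independent E I \<longleftrightarrow> (\<forall>u\<in>I. \<forall>v\<in>I. {u, v} \<notin> E)"

text \<open>Maximum weight of an independent set of the induced subgraph G[S]
(for finite S; equals 0 for S empty).\<close>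
definition alpha_w :: "'a set set \<Rightarrow> ('a \<Rightarrow> real) \<Rightarrow> 'a set \<Rightarrow> real" where
  "alpha_w E w S = Max {wsum w I | I. I \<subseteq> S \<and> independent E I}"

end

theory Submission
  imports Defs
begin

lemma nbrs_sub: "simple_graph V E \<Longrightarrow> nbrs E p \<subseteq> V"
proof
  fix u assume g: "simple_graph V E" and "u \<in> nbrs E p"
  then have "{u,p} \<in> E" unfolding nbrs_def by simp
  then obtain a b where "{u,p} = {a,b}" "a \<in> V" "b \<in> V" using g unfolding simple_graph_def by blast
  then show "u \<in> V" by (metis insertCI insertE singletonD)
qed

lemma p_notin_nbrs: "simple_graph V E \<Longrightarrow> p \<notin> nbrs E p"
proof
  assume g: "simple_graph V E" and "p \<in> nbrs E p"
  then have "{p,p} \<in> E" unfolding nbrs_def by simp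
  then obtain a b where "{p,p} = {a,b}" "a \<noteq> b" using g unfolding simple_graph_def by blast
  then show False by (metis doubleton_eq_iff)
qed

lemma swap_cover:
  assumes g: "simple_graph V E" and vc: "vertex_cover V E M" and p: "p \<in> M"
  shows "vertex_cover V E (M - {p} \<union> (nbrs E p - M))"
  unfolding vertex_cover_def
proof (intro conjI ballI)
  show "M - {p} \<union> (nbrs E p - M) \<subseteq> V"
    using vc nbrs_sub[OF g] unfolding vertex_cover_def by blast
  fix e assume e: "e \<in> E"
  obtain a b where ab: "e = {a,b}" and anb: "a \<noteq> b" using g e unfolding simple_graph_def by blast
  have "e \<inter> M \<noteq> {}" using vc e unfolding vertex_cover_def by blast
  then have abM: "a \<in> M \<or> b \<in> M" using ab by auto
  have ea: "{a,b} \<in> E" using e ab by simp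
  show "e \<inter> (M - {p} \<union> (nbrs E p - M)) \<noteq> {}"
  proof (cases "a \<in> M - {p} \<or> b \<in> M - {p}")
    case True
    then show ?thesis using ab by auto
  next
    case False
    then have "(a = p \<and> b \<notin> M) \<or> (b = p \<and> a \<notin> M)" using abM p anb by auto
    then show ?thesis
    proof
      assume h: "a = p \<and> b \<notin> M"
      then have "b \<in> nbrs E p" using ea unfolding nbrs_def by (simp add: insert_commute)
      then show ?thesis using h ab by auto
    next
      assume h: "b = p \<and> a \<notin> M"
      then have "a \<in> nbrs E p" using ea unfolding nbrs_def by simp
      then show ?thesis using h ab by auto
    qed
  qed
qed

lemma swap_weight:
  assumes g: "simple_graph V E" and vc: "vertex_cover V E M" and p: "p \<in> M"
  shows "wsum w (M - {p} \<union> (nbrs E p - M)) = wsum w M - w p + wsum w (nbrs E p - M)"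
proof -
  have fV: "finite V" using g unfolding simple_graph_def by blast
  have fM: "finite M" using vc fV unfolding vertex_cover_def by (meson finite_subset)
  have fN: "finite (nbrs E p - M)" using nbrs_sub[OF g] fV by (meson finite_Diff finite_subset)
  have "wsum w (M - {p} \<union> (nbrs E p - M)) = wsum w (M - {p}) + wsum w (nbrs E p - M)"
    unfolding wsum_def using fM fN by (subst sum.union_disjoint) auto
  moreover have "wsum w M = w p + wsum w (M - {p})"
    unfolding wsum_def using fM p by (simp add: sum.remove)
  ultimately show ?thesis by simp
qed

lemma indep_out:
  assumes vc: "vertex_cover V E M"
  shows "independent E (S - M)"
  unfolding independent_def
proof (intro ballI)
  fix u v assume "u \<in> S - M" "v \<in> S - M"
  then have "{u,v} \<inter> M = {}" by auto
  then show "{u,v} \<notin> E" using vc unfolding vertex_cover_def by auto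
qed

lemma alpha_ge:
  assumes "finite S" "I \<subseteq> S" "independent E I"
  shows "wsum w I \<le> alpha_w E w S"
proof -
  have "{wsum w I | I. I \<subseteq> S \<and> independent E I} \<subseteq> wsum w ` Pow S" by blast
  then have "finite {wsum w I | I. I \<subseteq> S \<and> independent E I}"
    using assms(1) by (meson finite_Pow_iff finite_imageI finite_subset)
  moreover have "wsum w I \<in> {wsum w I | I. I \<subseteq> S \<and> independent E I}" using assms(2,3) by blast
  ultimately show ?thesis unfolding alpha_w_def by (rule Max_ge)
qed

lemma key_a:
  assumes g: "simple_graph V E" and m: "min_weight_vc V E w M" and p: "p \<in> M"
  shows "w p \<le> wsum w (nbrs E p - M)"
proof -
  have vc: "vertex_cover V E M" using m unfolding min_weight_vc_def by blast
  have "wsum w M \<le> wsum w (M - {p} \<union> (nbrs E p - M))"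
    using m swap_cover[OF g vc p] unfolding min_weight_vc_def by blast
  then show ?thesis using swap_weight[OF g vc p, of w] by simp
qed

lemma key_b:
  assumes g: "simple_graph V E" and m: "min_weight_vc V E w M" and p: "p \<in> M"
    and all: "\<forall>VCw. min_weight_vc V E w VCw \<longrightarrow> p \<in> VCw"
  shows "w p < wsum w (nbrs E p - M)"
proof -
  have vc: "vertex_cover V E M" using m unfolding min_weight_vc_def by blast
  let ?M = "M - {p} \<union> (nbrs E p - M)"
  have "p \<notin> ?M" using p_notin_nbrs[OF g] by blast
  then have "\<not> min_weight_vc V E w ?M" using all by blast
  then obtain C' where "vertex_cover V E C'" "wsum w C' < wsum w ?M"
    using swap_cover[OF g vc p] unfolding min_weight_vc_def by force
  moreover have "wsum w M \<le> wsum w C'" using m \<open>vertex_cover V E C'\<close> unfolding min_weight_vc_def by blast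
  ultimately show ?thesis using swap_weight[OF g vc p, of w] by simp
qed

lemma mwvc_exists:
  assumes g: "simple_graph V E"
  shows "\<exists>M. min_weight_vc V E w M"
proof -
  have fV: "finite V" using g unfolding simple_graph_def by blast
  let ?S = "{C. vertex_cover V E C}"
  have fin: "finite (wsum w ` ?S)"
  proof (rule finite_imageI, rule finite_subset[of _ "Pow V"])
    show "?S \<subseteq> Pow V" unfolding vertex_cover_def by blast
    show "finite (Pow V)" using fV by simp
  qed
  have "V \<in> ?S" using g unfolding vertex_cover_def simple_graph_def by blast
  then have ne: "wsum w ` ?S \<noteq> {}" by blast
  have "Min (wsum w ` ?S) \<in> wsum w ` ?S" using Min_in[OF fin ne] .
  then obtain M where M: "M \<in> ?S" "wsum w M = Min (wsum w ` ?S)" by force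
  have "min_weight_vc V E w M"
  proof -
    have "\<forall>C'. vertex_cover V E C' \<longrightarrow> wsum w M \<le> wsum w C'"
    proof (intro allI impI)
      fix C' assume "vertex_cover V E C'"
      then have "wsum w C' \<in> wsum w ` ?S" by blast
      then show "wsum w M \<le> wsum w C'" unfolding M(2) using fin by (rule Min_le[rotated])
    qed
    then show ?thesis unfolding min_weight_vc_def using M(1) by blast
  qed
  then show ?thesis by blast
qed

theorem theorem2p3:
  fixes V :: "'a set" and E :: "'a set set" and w :: "'a \<Rightarrow> real"
    and IC C :: "'a set"
  assumes graph: "simple_graph V E"
    and wpos: "\<forall>v\<in>V. w v > 0"
    and IC_sub: "IC \<subseteq> V" and C_sub: "C \<subseteq> V"
  shows
    "(\<forall>VCw. min_weight_vc V E w VCw \<and> IC \<subseteq> VCw \<longrightarrow>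
          (\<forall>p\<in>IC. w p \<le> alpha_w E w (nbrs E p - IC)) \<and>
          (\<forall>v\<in>IC. \<forall>u\<in>nbrs2 E v.
             w v > alpha_w E w (nbrs E v - (IC \<union> nbrs E u)) \<longrightarrow> IC \<union> {u} \<subseteq> VCw))
     \<and>
     ((\<forall>VCw. min_weight_vc V E w VCw \<longrightarrow> C \<subseteq> VCw) \<longrightarrow>
        (\<forall>p\<in>C. w p < alpha_w E w (nbrs E p - C)) \<and>
        (\<forall>v\<in>C. \<forall>u\<in>nbrs2 E v.
           w v \<ge> alpha_w E w (nbrs E v - (C \<union> nbrs E u)) \<longrightarrow>
           (\<forall>VCw. min_weight_vc V E w VCw \<longrightarrow> C \<union> {u} \<subseteq> VCw)))"
proof (intro conjI allI impI ballI)
  have fV: "finite V" using graph unfolding simple_graph_def by blast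
  have fN: "\<And>p S. finite (nbrs E p - S)" using nbrs_sub[OF graph] fV by (meson finite_Diff finite_subset)
  have nbr_cov: "\<And>M u x. min_weight_vc V E w M \<Longrightarrow> u \<notin> M \<Longrightarrow> x \<in> nbrs E u \<Longrightarrow> x \<in> M"
  proof -
    fix M u x assume "min_weight_vc V E w M" "u \<notin> M" "x \<in> nbrs E u"
    then have "{x,u} \<inter> M \<noteq> {}" "{x,u} \<in> E" unfolding min_weight_vc_def vertex_cover_def nbrs_def by auto
    then show "x \<in> M" using \<open>u \<notin> M\<close> by auto
  qed
  {
    fix VCw p assume h: "min_weight_vc V E w VCw \<and> IC \<subseteq> VCw" and p: "p \<in> IC"
    have "w p \<le> wsum w (nbrs E p - VCw)" using key_a[OF graph _ , of w VCw p] h p by blast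
    also have "\<dots> \<le> alpha_w E w (nbrs E p - IC)"
      using h by (intro alpha_ge[OF fN _ indep_out[of V E VCw]]) (auto simp: min_weight_vc_def)
    finally show "w p \<le> alpha_w E w (nbrs E p - IC)" .
  }
  {
    fix VCw v u assume h: "min_weight_vc V E w VCw \<and> IC \<subseteq> VCw" and v: "v \<in> IC"
      and u: "u \<in> nbrs2 E v" and lt: "alpha_w E w (nbrs E v - (IC \<union> nbrs E u)) < w v"
    show "IC \<union> {u} \<subseteq> VCw"
    proof (rule ccontr)
      assume "\<not> ?thesis"
      then have un: "u \<notin> VCw" using h by blast
      have "w v \<le> wsum w (nbrs E v - VCw)" using key_a[OF graph, of w VCw v] h v by blast
      also have "\<dots> \<le> alpha_w E w (nbrs E v - (IC \<union> nbrs E u))"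
        using h nbr_cov[OF _ un] by (intro alpha_ge[OF fN _ indep_out[of V E VCw]]) (auto simp: min_weight_vc_def)
      finally show False using lt by simp
    qed
  }
  {
    assume all: "\<forall>VCw. min_weight_vc V E w VCw \<longrightarrow> C \<subseteq> VCw"
    obtain M where M: "min_weight_vc V E w M" using mwvc_exists[OF graph] by blast
    {
      fix p assume p: "p \<in> C"
      have "w p < wsum w (nbrs E p - M)" using key_b[OF graph M, of p] all M p by blast
      also have "\<dots> \<le> alpha_w E w (nbrs E p - C)"
        using all M by (intro alpha_ge[OF fN _ indep_out[of V E M]]) (auto simp: min_weight_vc_def)
      finally show "w p < alpha_w E w (nbrs E p - C)" .
    }
    {
      fix v u VCw assume v: "v \<in> C" and u: "u \<in> nbrs2 E v"
        and ge: "alpha_w E w (nbrs E v - (C \<union> nbrs E u)) \<le> w v"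
        and h: "min_weight_vc V E w VCw"
      show "C \<union> {u} \<subseteq> VCw"
      proof (rule ccontr)
        assume "\<not> ?thesis"
        then have un: "u \<notin> VCw" using h all by blast
        have "w v < wsum w (nbrs E v - VCw)" using key_b[OF graph h, of v] all h v by blast
        also have "\<dots> \<le> alpha_w E w (nbrs E v - (C \<union> nbrs E u))"
          using h all nbr_cov[OF h un] by (intro alpha_ge[OF fN _ indep_out[of V E VCw]]) (auto simp: min_weight_vc_def)
        finally show False using ge by simp
      qed
    }
  }
qed

end
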